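(* For all integers $n\geq 1$, $m\geq 0$, $\operatorname{diam}(Y_{n,m})=\operatorname{ecc}_{Z_{n,m}}(0)$, where $\operatorname{ecc}_{Z_{n,m}}(0)$ is the maximum graph distance in $Z_{n,m}$ from the all-zero vertex $0$ to any vertex.
   Context: Elements of $\mathbb{Z}_n$ are identified with their representatives in $\{0,\dots,n-1\}$. For a subset $S\subseteq\mathbb{Z}$, consider vertices $u=(u_0,\dots,u_{m+1})\in\mathbb{Z}_n\times S^m\times\mathbb{Z}_n$ with $\sum_{i=0}^{m+1}u_i\equiv0\pmod n$; two such vertices $u,v$ are adjacent if there is $0\leq i\leq m$ such that $u_j=v_j$ for all $j\notin\{i,i+1\}$ and either ($u_i=v_i+1$, $u_{i+1}=v_{i+1}-1$) or ($u_i=v_i-1$, $u_{i+1}=v_{i+1}+1$), with arithmetic in coordinates $0,m+1$ taken in $\mathbb{Z}_n$ and in coordinates $1,\dots,m$ in $\mathbb{Z}$. The Yoke graph $Y_{n,m}$ is this graph for $S=\{0,1\}$; the dYoke graph $Z_{n,m}$ is this graph for $S=\{-1,0,1\}$. The vertex $(0,\dots,0)$ is denoted $0$. *)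

theory Defs
  imports Main "HOL-Library.Extended_Nat"
begin

text \<open>A vertex (u_0,...,u_{m+1}) is represented as an int list of length m+2.
  Coordinates 0 and m+1 are elements of Z_n (representatives in {0..n-1}),
  coordinates 1..m lie in S.\<close>

definition gvert :: "nat \<Rightarrow> nat \<Rightarrow> int set \<Rightarrow> int list set" where
  "gvert n m S = {u. length u = m + 2 \<and> u ! 0 \<in> {0..<int n} \<and> u ! (m+1) \<in> {0..<int n}
      \<and> (\<forall>j\<in>{1..m}. u ! j \<in> S) \<and> (\<Sum>j<m+2. u ! j) mod int n = 0}"

definition coord_add :: "nat \<Rightarrow> nat \<Rightarrow> nat \<Rightarrow> int \<Rightarrow> int \<Rightarrow> int" where
  "coord_add n m j x d = (if j = 0 \<or> j = m + 1 then (x + d) mod int n else x + d)"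

definition gadj :: "nat \<Rightarrow> nat \<Rightarrow> int set \<Rightarrow> int list \<Rightarrow> int list \<Rightarrow> bool" where
  "gadj n m S u v \<longleftrightarrow> u \<in> gvert n m S \<and> v \<in> gvert n m S \<and>
     (\<exists>i\<le>m. \<exists>d\<in>{1, -1}. (\<forall>j<m+2. j \<noteq> i \<and> j \<noteq> Suc i \<longrightarrow> u ! j = v ! j)
        \<and> u ! i = coord_add n m i (v ! i) d
        \<and> u ! Suc i = coord_add n m (Suc i) (v ! Suc i) (- d))"

text \<open>Graph distance (\<infinity> if not connected by a walk).\<close>
definition gdist :: "nat \<Rightarrow> nat \<Rightarrow> int set \<Rightarrow> int list \<Rightarrow> int list \<Rightarrow> enat" where
  "gdist n m S u v = (INF k \<in> {k. (gadj n m S ^^ k) u v}. enat k)"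

definition gdiam :: "nat \<Rightarrow> nat \<Rightarrow> int set \<Rightarrow> enat" where
  "gdiam n m S = (SUP u \<in> gvert n m S. SUP v \<in> gvert n m S. gdist n m S u v)"

definition gecc :: "nat \<Rightarrow> nat \<Rightarrow> int set \<Rightarrow> int list \<Rightarrow> enat" where
  "gecc n m S u = (SUP v \<in> gvert n m S. gdist n m S u v)"

definition yoke_S :: "int set" where "yoke_S = {0, 1}"
definition dyoke_S :: "int set" where "dyoke_S = {-1, 0, 1}"

end

theory Submission imports Defs begin

lemma G:
  fixes x y f :: "nat \<Rightarrow> int"
  assumes lohi: "lo < hi"
    and H: "\<And>j. 1 \<le> j \<Longrightarrow> j \<le> m \<Longrightarrow> lo \<le> x j \<and> x j \<le> hi \<and> lo \<le> y j \<and> y j \<le> hi \<and> y j - x j = f j - f (j - 1)"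
    and i0: "i0 \<le> m" "f i0 > 0"
  shows "\<exists>i\<le>m. f i > 0 \<and> (1 \<le> i \<longrightarrow> x i < hi) \<and> (i + 1 \<le> m \<longrightarrow> lo < x (i + 1))"
proof -
  have R: "\<And>i. m - i = d \<Longrightarrow> i \<le> m \<Longrightarrow> f i > 0 \<Longrightarrow> (1 \<le> i \<longrightarrow> x i < hi) \<Longrightarrow> ?thesis" for d
  proof (induction d)
    case 0
    then show ?case by (intro exI[of _ i]) auto
  next
    case (Suc d)
    show ?case
    proof (cases "lo < x (i + 1)")
      case True
      then show ?thesis using Suc.prems by (intro exI[of _ i]) auto
    next
      case False
      have im: "i + 1 \<le> m" using Suc.prems by auto
      from H[of "i+1"] im False have "x (i+1) = lo" "f (i+1) \<ge> f i" by auto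
      then show ?thesis using Suc.IH[of "i+1"] Suc.prems im lohi by auto
    qed
  qed
  have L: "i \<le> m \<Longrightarrow> f i > 0 \<Longrightarrow> (i + 1 \<le> m \<longrightarrow> lo < x (i + 1)) \<Longrightarrow> ?thesis" for i
  proof (induction i)
    case 0
    then show ?case by (intro exI[of _ 0]) auto
  next
    case (Suc i)
    show ?case
    proof (cases "x (Suc i) < hi")
      case True
      then show ?thesis using Suc.prems by (intro exI[of _ "Suc i"]) auto
    next
      case False
      from H[of "Suc i"] Suc.prems False have "x (Suc i) = hi" "f i \<ge> f (Suc i)" by auto
      then show ?thesis using Suc.IH Suc.prems lohi by auto
    qed
  qed
  show ?thesis
  proof (cases "1 \<le> i0 \<longrightarrow> x i0 < hi")
    case True
    then show ?thesis using R[of i0] i0 by auto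
  next
    case False
    then have "1 \<le> i0" "x i0 = hi" using H[of i0] i0 by auto
    moreover have "f (i0 - 1) \<ge> f i0" using H[of i0] i0 \<open>1 \<le> i0\<close> \<open>x i0 = hi\<close> by auto
    ultimately show ?thesis using L[of "i0 - 1"] i0 lohi by auto
  qed
qed

definition fv :: "nat \<Rightarrow> nat \<Rightarrow> int list \<Rightarrow> int list \<Rightarrow> (nat \<Rightarrow> int) \<Rightarrow> bool" where
  "fv n m a b f \<longleftrightarrow> (b!0 - a!0 - f 0) mod int n = 0 \<and> (b!(m+1) - a!(m+1) + f m) mod int n = 0
     \<and> (\<forall>j. 1 \<le> j \<and> j \<le> m \<longrightarrow> b!j - a!j = f j - f (j - 1))"

definition cost :: "nat \<Rightarrow> (nat \<Rightarrow> int) \<Rightarrow> int" where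
  "cost m f = (\<Sum>i\<le>m. \<bar>f i\<bar>)"

lemma cost_upd_le: "i \<le> m \<Longrightarrow> cost m (f(i := f i + e)) \<le> cost m f + \<bar>e\<bar>"
proof -
  assume i: "i \<le> m"
  have "cost m (f(i := f i + e)) = cost m f - \<bar>f i\<bar> + \<bar>f i + e\<bar>"
    unfolding cost_def using i by (simp add: sum.remove[of "{..m}" i] )
  then show ?thesis by linarith
qed

lemma A:
  assumes "(gadj n m S ^^ k) a b"
  shows "\<exists>f. fv n m a b f \<and> cost m f \<le> int k"
  using assms
proof (induction k arbitrary: b)
  case 0
  then have "a = b" by auto
  then show ?case by (intro exI[of _ "\<lambda>_. 0"]) (simp add: fv_def cost_def)
next
  case (Suc k)
  from Suc.prems obtain c where c1: "(gadj n m S ^^ k) a c" and c2: "gadj n m S c b"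
    by (auto elim: relpowp_Suc_E)
  from Suc.IH[OF c1] obtain f where f: "fv n m a c f" "cost m f \<le> int k" by auto
  from c2 obtain i d where i: "i \<le> m" and d: "d \<in> {1, -1}"
    and same: "\<forall>j<m+2. j \<noteq> i \<and> j \<noteq> Suc i \<longrightarrow> c ! j = b ! j"
    and ci: "c ! i = coord_add n m i (b ! i) d"
    and cs: "c ! Suc i = coord_add n m (Suc i) (b ! Suc i) (- d)"
    unfolding gadj_def by blast
  define f' where "f' = f(i := f i - d)"
  have "fv n m a b f'"
  proof -
    have e0: "(b!0 - a!0 - f' 0) mod int n = 0"
    proof (cases "i = 0")
      case True
      then have "c!0 = (b!0 + d) mod int n" using ci by (simp add: coord_add_def)
      then have "(b!0 - a!0 - f' 0) mod int n = (c!0 - a!0 - f 0) mod int n"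
      proof -
        assume c0: "c!0 = (b!0 + d) mod int n"
        have "(b!0 - a!0 - f' 0) mod int n = (b!0 + d - (a!0 + f 0)) mod int n"
          using True by (simp add: algebra_simps f'_def)
        also have "\<dots> = ((b!0+d) mod int n - (a!0 + f 0)) mod int n" by (rule mod_diff_left_eq[symmetric])
        also have "\<dots> = (c!0 - a!0 - f 0) mod int n" using c0 by (simp add: algebra_simps)
        finally show ?thesis .
      qed
      then show ?thesis using f(1) by (simp add: fv_def)
    next
      case False
      then have "c!0 = b!0" using same by auto
      then show ?thesis using f(1) False by (simp add: fv_def f'_def)
    qed
    have e1: "(b!(m+1) - a!(m+1) + f' m) mod int n = 0"
    proof (cases "i = m")
      case True
      then have "c!(m+1) = (b!(m+1) - d) mod int n" using cs by (simp add: coord_add_def)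
      then have "(b!(m+1) - a!(m+1) + f' m) mod int n = (c!(m+1) - a!(m+1) + f m) mod int n"
      proof -
        assume c0: "c!(m+1) = (b!(m+1) - d) mod int n"
        have "(b!(m+1) - a!(m+1) + f' m) mod int n = (b!(m+1) - d + (f m - a!(m+1))) mod int n"
          using True by (simp add: algebra_simps f'_def)
        also have "\<dots> = ((b!(m+1) - d) mod int n + (f m - a!(m+1))) mod int n" by (rule mod_add_left_eq[symmetric])
        also have "\<dots> = (c!(m+1) - a!(m+1) + f m) mod int n" using c0 by (simp add: algebra_simps)
        finally show ?thesis .
      qed
      then show ?thesis using f(1) by (simp add: fv_def)
    next
      case False
      then have "c!(m+1) = b!(m+1)" using same i by auto
      then show ?thesis using f(1) False by (simp add: fv_def f'_def)
    qed
    have e2: "b!j - a!j = f' j - f' (j - 1)" if j: "1 \<le> j" "j \<le> m" for j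
    proof -
      have fj: "c!j - a!j = f j - f (j - 1)" using f(1) j by (simp add: fv_def)
      consider "j = i" | "j = Suc i" | "j \<noteq> i" "j \<noteq> Suc i" by blast
      then show ?thesis
      proof cases
        case 1
        then have "c!j = b!j + d" using ci j by (simp add: coord_add_def)
        then show ?thesis using fj 1 j by (auto simp add: f'_def)
      next
        case 2
        then have "c!j = b!j - d" using cs j by (simp add: coord_add_def)
        then show ?thesis using fj 2 j by (auto simp add: f'_def)
      next
        case 3
        then have "c!j = b!j" using same j by auto
        then show ?thesis using fj 3 j by (auto simp add: f'_def)
      qed
    qed
    show ?thesis using e0 e1 e2 by (simp add: fv_def)
  qed
  moreover have "cost m f' \<le> int (Suc k)"
    using cost_upd_le[OF i, of f "- d"] f(2) d unfolding f'_def by auto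
  ultimately show ?case by blast
qed

lemma cost_upd: "i \<le> m \<Longrightarrow> cost m (f(i := v)) = cost m f - \<bar>f i\<bar> + \<bar>v\<bar>"
  unfolding cost_def by (simp add: sum.remove[of "{..m}" i])

lemma mod_back1: "(((x::int) + s) mod n - s) mod n = x mod n"
  by (metis add_diff_cancel_right' mod_diff_left_eq)

lemma mod_back2: "(((x::int) - s) mod n + s) mod n = x mod n"
  by (metis diff_add_cancel mod_add_left_eq)

lemma step:
  assumes n: "n \<ge> 1" and a: "a \<in> gvert n m {lo..hi}" and fv: "fv n m a b f"
    and i: "i \<le> m" and s: "s \<in> {1, -1}"
    and l: "1 \<le> i \<longrightarrow> lo \<le> a!i + s \<and> a!i + s \<le> hi"
    and r: "Suc i \<le> m \<longrightarrow> lo \<le> a!Suc i - s \<and> a!Suc i - s \<le> hi"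
  shows "\<exists>a'. gadj n m {lo..hi} a a' \<and> a' \<in> gvert n m {lo..hi} \<and> fv n m a' b (f(i := f i - s))"
proof -
  define g where "g j = (if j = i then coord_add n m i (a!i) s
     else if j = Suc i then coord_add n m (Suc i) (a!Suc i) (-s) else a!j)" for j
  define a' where "a' = map g [0..<m+2]"
  have a'n: "a'!j = g j" if "j < m+2" for j using that unfolding a'_def by (simp del: upt_Suc add: nth_map)
  have len: "length a = m + 2" "length a' = m + 2" using a by (auto simp del: upt_Suc simp: gvert_def a'_def)
  have np: "int n > 0" using n by auto
  have amem: "a!0 \<in> {0..<int n}" "a!(m+1) \<in> {0..<int n}" "\<And>j. j \<in> {1..m} \<Longrightarrow> a!j \<in> {lo..hi}"
    and asum: "(\<Sum>j<m+2. a ! j) mod int n = 0" using a by (auto simp: gvert_def)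
  define \<delta> where "\<delta> j = (if j = i then s else 0) - (if j = Suc i then s else 0)" for j
  have gmod: "g j mod int n = (a!j + \<delta> j) mod int n" for j
    by (auto simp: g_def \<delta>_def coord_add_def)
  have dsum: "(\<Sum>j<m+2. \<delta> j) = 0" using i by (simp add: \<delta>_def sum_subtractf)
  have "(\<Sum>j<m+2. a' ! j) mod int n = (\<Sum>j<m+2. g j) mod int n" using a'n by simp
  also have "\<dots> = (\<Sum>j<m+2. g j mod int n) mod int n" by (rule mod_sum_eq[symmetric])
  also have "\<dots> = (\<Sum>j<m+2. (a!j + \<delta> j) mod int n) mod int n" by (simp add: gmod)
  also have "\<dots> = (\<Sum>j<m+2. (a!j + \<delta> j)) mod int n" by (rule mod_sum_eq)
  also have "\<dots> = 0" using dsum asum by (simp add: sum.distrib)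
  finally have a'sum: "(\<Sum>j<m+2. a' ! j) mod int n = 0" .
  have a'0: "a'!0 \<in> {0..<int n}" using amem np by (auto simp: a'n g_def coord_add_def)
  have a'1: "a'!(m+1) \<in> {0..<int n}" using amem np i by (auto simp: a'n g_def coord_add_def)
  have a'm: "a'!j \<in> {lo..hi}" if "j \<in> {1..m}" for j
    using that amem(3)[OF that] l r by (auto simp: a'n g_def coord_add_def)
  have a'v: "a' \<in> gvert n m {lo..hi}" unfolding gvert_def using len a'sum a'0 a'1 a'm by auto
  have adj: "gadj n m {lo..hi} a a'"
    unfolding gadj_def
  proof (intro conjI a a'v exI[of _ i] i bexI[of _ "-s"])
    show "-s \<in> {1, -1}" using s by auto
    show "\<forall>j<m + 2. j \<noteq> i \<and> j \<noteq> Suc i \<longrightarrow> a ! j = a' ! j" by (auto simp: a'n g_def)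
    show "a ! i = coord_add n m i (a' ! i) (- s)"
      using i amem mod_back1[of "a!i" s "int n"] by (auto simp: a'n g_def coord_add_def)
    show "a ! Suc i = coord_add n m (Suc i) (a' ! Suc i) (- (- s))"
      using i amem mod_back2[of "a!Suc i" s "int n"] by (auto simp: a'n g_def coord_add_def)
  qed
  define f' where "f' = f(i := f i - s)"
  have fv': "fv n m a' b f'"
  proof -
    have e0: "(b!0 - a'!0 - f' 0) mod int n = 0"
    proof (cases "i = 0")
      case True
      have "(b!0 - a'!0 - f' 0) mod int n = (b!0 - f' 0 - ((a!0 + s) mod int n)) mod int n"
        using True by (simp add: a'n g_def coord_add_def algebra_simps)
      also have "\<dots> = (b!0 - f' 0 - (a!0 + s)) mod int n" by (rule mod_diff_right_eq)
      also have "\<dots> = (b!0 - a!0 - f 0) mod int n" using True by (simp add: f'_def algebra_simps)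
      finally show ?thesis using fv by (simp add: fv_def)
    next
      case False
      then show ?thesis using fv by (simp add: fv_def f'_def a'n g_def)
    qed
    have e1: "(b!(m+1) - a'!(m+1) + f' m) mod int n = 0"
    proof (cases "i = m")
      case True
      have "(b!(m+1) - a'!(m+1) + f' m) mod int n = (b!(m+1) + f' m - ((a!(m+1) - s) mod int n)) mod int n"
        using True by (simp add: a'n g_def coord_add_def algebra_simps)
      also have "\<dots> = (b!(m+1) + f' m - (a!(m+1) - s)) mod int n" by (rule mod_diff_right_eq)
      also have "\<dots> = (b!(m+1) - a!(m+1) + f m) mod int n" using True by (simp add: f'_def algebra_simps)
      finally show ?thesis using fv by (simp add: fv_def)
    next
      case False
      then show ?thesis using fv i by (simp add: fv_def f'_def a'n g_def)
    qed
    have e2: "b!j - a'!j = f' j - f' (j - 1)" if j: "1 \<le> j" "j \<le> m" for j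
    proof -
      have fj: "b!j - a!j = f j - f (j - 1)" using fv j by (simp add: fv_def)
      consider "j = i" | "j = Suc i" | "j \<noteq> i" "j \<noteq> Suc i" by blast
      then show ?thesis
      proof cases
        case 1
        then show ?thesis using fj 1 j by (auto simp add: f'_def a'n g_def coord_add_def)
      next
        case 2
        then show ?thesis using fj 2 j by (auto simp add: f'_def a'n g_def coord_add_def)
      next
        case 3
        then show ?thesis using fj 3 j by (auto simp add: f'_def a'n g_def)
      qed
    qed
    show ?thesis using e0 e1 e2 by (simp add: fv_def)
  qed
  show ?thesis using adj a'v fv' unfolding f'_def by blast
qed

lemma eq_mod_range: "x \<in> {0..<int n} \<Longrightarrow> y \<in> {0..<int n} \<Longrightarrow> (y - x) mod int n = 0 \<Longrightarrow> x = y"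
proof -
  assume x: "x \<in> {0..<int n}" and y: "y \<in> {0..<int n}" and d: "(y - x) mod int n = 0"
  show "x = y"
  proof (cases "x \<le> y")
    case True
    then have "(y - x) mod int n = y - x" using x y by (intro mod_pos_pos_trivial) auto
    then show ?thesis using d by simp
  next
    case False
    have "(y - x) mod int n = (y - x + int n) mod int n" by simp
    also have "\<dots> = y - x + int n" using x y False by (intro mod_pos_pos_trivial) auto
    finally show ?thesis using d x y False by simp
  qed
qed

lemma B:
  assumes lohi: "lo < hi" and n: "n \<ge> 1"
  shows "a \<in> gvert n m {lo..hi} \<Longrightarrow> b \<in> gvert n m {lo..hi} \<Longrightarrow> fv n m a b f \<Longrightarrow> nat (cost m f) = N
     \<Longrightarrow> (gadj n m {lo..hi} ^^ N) a b"
proof (induction N arbitrary: a f)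
  case 0
  have cnn: "cost m f \<ge> 0" unfolding cost_def by (simp add: sum_nonneg)
  then have "cost m f = 0" using 0 by auto
  then have fz: "\<forall>i\<le>m. f i = 0" unfolding cost_def by (simp add: sum_nonneg_eq_0_iff)
  have "a = b"
  proof (rule nth_equalityI)
    show "length a = length b" using "0.prems" by (simp add: gvert_def)
    fix j assume "j < length a"
    then have j: "j < m + 2" using "0.prems" by (simp add: gvert_def)
    consider "j = 0" | "j = m + 1" | "1 \<le> j" "j \<le> m" using j by linarith
    then show "a ! j = b ! j"
    proof cases
      case 1
      then show ?thesis using "0.prems" fz eq_mod_range[of "a!0" n "b!0"] by (simp add: gvert_def fv_def)
    next
      case 2
      then show ?thesis using "0.prems" fz eq_mod_range[of "a!(m+1)" n "b!(m+1)"] by (simp add: gvert_def fv_def)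
    next
      case 3
      then have "b!j - a!j = f j - f (j - 1)" using "0.prems"(3) by (simp add: fv_def)
      moreover have "f j = 0" "f (j - 1) = 0" using fz 3 by auto
      ultimately show ?thesis by simp
    qed
  qed
  then show ?case by simp
next
  case (Suc N)
  have "cost m f > 0" using Suc.prems by auto
  then obtain i0 where i0: "i0 \<le> m" "f i0 \<noteq> 0" unfolding cost_def
    by (metis (mono_tags, lifting) abs_zero atMost_iff order_less_irrefl sum.neutral)
  have av: "a!j \<in> {lo..hi}" "b!j \<in> {lo..hi}" if "1 \<le> j" "j \<le> m" for j
    using Suc.prems(1,2) that by (auto simp: gvert_def)
  have dj: "b!j - a!j = f j - f (j - 1)" if "1 \<le> j" "j \<le> m" for j
    using Suc.prems(3) that by (auto simp: fv_def)
  obtain i s where i: "i \<le> m" and s: "s \<in> {1, -1}" and sf: "s * f i > 0"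
    and l: "1 \<le> i \<longrightarrow> lo \<le> a!i + s \<and> a!i + s \<le> hi"
    and r: "Suc i \<le> m \<longrightarrow> lo \<le> a!Suc i - s \<and> a!Suc i - s \<le> hi"
  proof (cases "f i0 > 0")
    case True
    have H: "\<And>j. 1 \<le> j \<Longrightarrow> j \<le> m \<Longrightarrow> lo \<le> a!j \<and> a!j \<le> hi \<and> lo \<le> b!j \<and> b!j \<le> hi \<and> b!j - a!j = f j - f (j - 1)"
      using av dj by auto
    from G[of lo hi m "\<lambda>j. a!j" "\<lambda>j. b!j" f i0, OF lohi H i0(1) True]
    obtain i where ii: "i \<le> m" "f i > 0" "1 \<le> i \<longrightarrow> a!i < hi" "i + 1 \<le> m \<longrightarrow> lo < a!(i+1)"
      by blast
    have "1 \<le> i \<longrightarrow> lo \<le> a!i + 1 \<and> a!i + 1 \<le> hi" using ii av[of i] by auto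
    moreover have "Suc i \<le> m \<longrightarrow> lo \<le> a!Suc i - 1 \<and> a!Suc i - 1 \<le> hi" using ii av[of "Suc i"] by auto
    ultimately show ?thesis using that[of i 1] ii by auto
  next
    case False
    then have fn: "- f i0 > 0" using i0 by auto
    have H: "\<And>j. 1 \<le> j \<Longrightarrow> j \<le> m \<Longrightarrow> -hi \<le> - a!j \<and> - a!j \<le> -lo \<and> -hi \<le> - b!j \<and> - b!j \<le> -lo \<and> - b!j - - a!j = - f j - - f (j - 1)"
    proof -
      fix j :: nat assume j: "1 \<le> j" "j \<le> m"
      show "-hi \<le> - a!j \<and> - a!j \<le> -lo \<and> -hi \<le> - b!j \<and> - b!j \<le> -lo \<and> - b!j - - a!j = - f j - - f (j - 1)"
        using av[OF j] dj[OF j] by auto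
    qed
    have lh: "-hi < -lo" using lohi by auto
    from G[of "-hi" "-lo" m "\<lambda>j. - a!j" "\<lambda>j. - b!j" "\<lambda>j. - f j" i0, OF lh H i0(1) fn]
    obtain i where ii: "i \<le> m" "- f i > 0" "1 \<le> i \<longrightarrow> - a!i < - lo" "i + 1 \<le> m \<longrightarrow> - hi < - a!(i+1)"
      by blast
    have "1 \<le> i \<longrightarrow> lo \<le> a!i + -1 \<and> a!i + -1 \<le> hi" using ii av[of i] by auto
    moreover have "Suc i \<le> m \<longrightarrow> lo \<le> a!Suc i - -1 \<and> a!Suc i - -1 \<le> hi" using ii av[of "Suc i"] by auto
    ultimately show ?thesis using that[of i "-1"] ii by auto
  qed
  from step[OF n Suc.prems(1) Suc.prems(3) i s l r] obtain a' where
    a': "gadj n m {lo..hi} a a'" "a' \<in> gvert n m {lo..hi}" "fv n m a' b (f(i := f i - s))" by blast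
  have "cost m (f(i := f i - s)) = cost m f - 1"
    using cost_upd[OF i, of f "f i - s"] s sf by auto
  then have "nat (cost m (f(i := f i - s))) = N" using Suc.prems(4) by auto
  from Suc.IH[OF a'(2) Suc.prems(2) a'(3) this] a'(1) show ?case by (rule relpowp_Suc_I2[rotated])
qed

lemma sum_split3: "(\<Sum>j<(m::nat)+2. h j) = h 0 + (\<Sum>j\<in>{1..m}. h j) + (h (m+1) :: int)"
proof -
  have "(\<Sum>j<m+2. h j) = (\<Sum>j<m+1. h j) + h (m+1)" by simp
  moreover have "(\<Sum>j<m+1. h j) = h 0 + (\<Sum>j\<in>{1..m}. h j)"
  proof (induction m)
    case 0 then show ?case by simp
  next
    case (Suc m) then show ?case by (simp add: add.assoc)
  qed
  ultimately show ?thesis by simp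
qed

lemma M:
  assumes lohi: "lo < hi" and n: "n \<ge> 1"
    and u: "u \<in> gvert n m {lo..hi}" and v: "v \<in> gvert n m {lo..hi}"
    and d0: "(v!0 - u!0) mod int n = (b!0 - a!0) mod int n"
    and d1: "(v!(m+1) - u!(m+1)) mod int n = (b!(m+1) - a!(m+1)) mod int n"
    and dm: "\<And>j. 1 \<le> j \<Longrightarrow> j \<le> m \<Longrightarrow> v!j - u!j = b!j - a!j"
  shows "gdist n m {lo..hi} u v \<le> gdist n m S a b"
  unfolding gdist_def
proof (rule INF_greatest)
  fix k assume "k \<in> {k. (gadj n m S ^^ k) a b}"
  then have w: "(gadj n m S ^^ k) a b" by simp
  from A[OF w] obtain f where f: "fv n m a b f" "cost m f \<le> int k" by blast
  have f': "fv n m u v f"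
  proof -
    have "(v!0 - u!0 - f 0) mod int n = ((v!0 - u!0) mod int n - f 0) mod int n" by (simp add: mod_diff_left_eq)
    also have "\<dots> = ((b!0 - a!0) mod int n - f 0) mod int n" using d0 by simp
    also have "\<dots> = (b!0 - a!0 - f 0) mod int n" by (simp add: mod_diff_left_eq)
    finally have e0: "(v!0 - u!0 - f 0) mod int n = 0" using f(1) by (simp add: fv_def)
    have "(v!(m+1) - u!(m+1) + f m) mod int n = ((v!(m+1) - u!(m+1)) mod int n + f m) mod int n" by (simp add: mod_add_left_eq)
    also have "\<dots> = ((b!(m+1) - a!(m+1)) mod int n + f m) mod int n" using d1 by simp
    also have "\<dots> = (b!(m+1) - a!(m+1) + f m) mod int n" by (simp add: mod_add_left_eq)
    finally have e1: "(v!(m+1) - u!(m+1) + f m) mod int n = 0" using f(1) by (simp add: fv_def)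
    show ?thesis using e0 e1 dm f(1) by (simp add: fv_def)
  qed
  have "(gadj n m {lo..hi} ^^ nat (cost m f)) u v" using B[OF lohi n u v f' refl] .
  then have "(INF k \<in> {k. (gadj n m {lo..hi} ^^ k) u v}. enat k) \<le> enat (nat (cost m f))"
    by (intro INF_lower) simp
  also have "\<dots> \<le> enat k" using f(2) by simp
  finally show "(INF k \<in> {k. (gadj n m {lo..hi} ^^ k) u v}. enat k) \<le> enat k" .
qed



lemma mapnth: "j < m + 2 \<Longrightarrow> map g [0..<m+2] ! j = g j"
  by (simp del: upt_Suc add: nth_map)

lemma lenmap: "length (map g [0..<m+2]) = m + 2"
  by simp

theorem theorem4p5:
  fixes n m :: nat
  assumes "n \<ge> 1"
  shows "gdiam n m yoke_S = gecc n m dyoke_S (replicate (m + 2) 0)"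
proof -
  have Y: "yoke_S = {0..1::int}" by (auto simp: yoke_S_def)
  have Z: "dyoke_S = {-1..1::int}" by (auto simp: dyoke_S_def)
  define z where "z = replicate (m+2) (0::int)"
  have np: "int n > 0" using assms by auto
  have lh1: "(0::int) < 1" and lh2: "(-1::int) < 1" by auto
  have zn: "z!j = 0" if "j < m+2" for j using that unfolding z_def by (simp del: replicate.simps replicate_Suc add: nth_replicate)
  have zsum: "(\<Sum>j<m+2. z!j) = 0" by (rule sum.neutral) (simp add: zn)
  have zv: "z \<in> gvert n m {-1..1}" unfolding gvert_def using np zn zsum by (auto simp del: replicate.simps replicate_Suc simp: z_def)
  show ?thesis unfolding Y Z gdiam_def gecc_def z_def[symmetric]
  proof (rule antisym)
    show "(SUP u\<in>gvert n m {0..1}. SUP v\<in>gvert n m {0..1}. gdist n m {0..1} u v)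
      \<le> (SUP w\<in>gvert n m {-1..1}. gdist n m {-1..1} z w)"
    proof (intro SUP_least)
      fix u v assume u: "u \<in> gvert n m {0..1}" and v: "v \<in> gvert n m {0..1}"
      define g where "g j = (if j = 0 \<or> j = m+1 then (v!j - u!j) mod int n else v!j - u!j)" for j
      define w where "w = map g [0..<m+2]"
      have wn: "w!j = g j" if "j < m+2" for j unfolding w_def using that by (rule mapnth)
      have gm: "g j mod int n = (v!j - u!j) mod int n" for j by (simp add: g_def)
      have usum: "(\<Sum>j<m+2. u!j) mod int n = 0" and vsum: "(\<Sum>j<m+2. v!j) mod int n = 0"
        using u v by (auto simp: gvert_def)
      have "(\<Sum>j<m+2. w!j) mod int n = (\<Sum>j<m+2. g j) mod int n" using wn by simp
      also have "\<dots> = (\<Sum>j<m+2. g j mod int n) mod int n" by (rule mod_sum_eq[symmetric])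
      also have "\<dots> = (\<Sum>j<m+2. (v!j - u!j) mod int n) mod int n" by (simp add: gm)
      also have "\<dots> = (\<Sum>j<m+2. (v!j - u!j)) mod int n" by (rule mod_sum_eq)
      also have "\<dots> = ((\<Sum>j<m+2. v!j) - (\<Sum>j<m+2. u!j)) mod int n" by (simp add: sum_subtractf)
      also have "\<dots> = ((\<Sum>j<m+2. v!j) mod int n - (\<Sum>j<m+2. u!j) mod int n) mod int n" by (rule mod_diff_eq[symmetric])
      also have "\<dots> = 0" using usum vsum by simp
      finally have wsum: "(\<Sum>j<m+2. w!j) mod int n = 0" .
      have wmid: "w!j \<in> {-1..1}" if "j \<in> {1..m}" for j
      proof -
        have "u!j \<in> {0..1}" "v!j \<in> {0..1}" using u v that by (auto simp: gvert_def)
        then show ?thesis using that by (auto simp: wn g_def)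
      qed
      have w0: "w!0 \<in> {0..<int n}" "w!(m+1) \<in> {0..<int n}" using np by (auto simp: wn g_def)
      have wv: "w \<in> gvert n m {-1..1}" unfolding gvert_def using wsum wmid w0 by (auto simp del: upt_Suc simp: w_def)
      have "gdist n m {0..1} u v \<le> gdist n m {-1..1} z w"
      proof (rule M[OF lh1 assms u v])
        show "(v ! 0 - u ! 0) mod int n = (w ! 0 - z ! 0) mod int n" by (simp add: wn zn g_def)
        show "(v ! (m + 1) - u ! (m + 1)) mod int n = (w ! (m + 1) - z ! (m + 1)) mod int n"
          by (simp add: wn zn g_def)
        show "v ! j - u ! j = w ! j - z ! j" if "1 \<le> j" "j \<le> m" for j
          using that by (simp add: wn zn g_def)
      qed
      also have "\<dots> \<le> (SUP w\<in>gvert n m {-1..1}. gdist n m {-1..1} z w)" by (rule SUP_upper[OF wv])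
      finally show "gdist n m {0..1} u v \<le> (SUP w\<in>gvert n m {-1..1}. gdist n m {-1..1} z w)" .
    qed
    show "(SUP w\<in>gvert n m {-1..1}. gdist n m {-1..1} z w)
      \<le> (SUP u\<in>gvert n m {0..1}. SUP v\<in>gvert n m {0..1}. gdist n m {0..1} u v)"
    proof (rule SUP_least)
      fix w assume w: "w \<in> gvert n m {-1..1}"
      have wmid: "w!j \<in> {-1..1}" if "j \<in> {1..m}" for j using w that by (auto simp: gvert_def)
      have w0: "w!0 \<in> {0..<int n}" "w!(m+1) \<in> {0..<int n}" and wsum: "(\<Sum>j<m+2. w!j) mod int n = 0"
        using w by (auto simp: gvert_def)
      define M where "M = (\<Sum>j\<in>{1..m}. if w!j = -1 then 1 else 0 :: int)"
      define gu where "gu j = (if j = 0 then (-M) mod int n else if j = m+1 then 0 else (if w!j = -1 then 1 else 0))" for j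
      define gv where "gv j = (if j = 0 then (w!0 + (-M) mod int n) mod int n else if j = m+1 then w!(m+1) else (if w!j = 1 then 1 else 0))" for j
      define u where "u = map gu [0..<m+2]"
      define v where "v = map gv [0..<m+2]"
      have un: "u!j = gu j" if "j < m+2" for j unfolding u_def using that by (rule mapnth)
      have vn: "v!j = gv j" if "j < m+2" for j unfolding v_def using that by (rule mapnth)
      have umid: "(\<Sum>j\<in>{1..m}. u!j) = M" unfolding M_def
        by (rule sum.cong) (auto simp: un gu_def)
      have vmid: "(\<Sum>j\<in>{1..m}. v!j) = (\<Sum>j\<in>{1..m}. w!j) + M" unfolding M_def
      proof -
        have "(\<Sum>j\<in>{1..m}. v!j) = (\<Sum>j\<in>{1..m}. w!j + (if w!j = -1 then 1 else 0))"
        proof (rule sum.cong)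
          fix j assume j: "j \<in> {1..m}"
          have "w!j \<in> {-1..1}" using wmid[OF j] .
          then have "w!j = -1 \<or> w!j = 0 \<or> w!j = 1" by auto
          then show "v!j = w!j + (if w!j = -1 then 1 else 0)" using j by (auto simp: vn gv_def)
        qed simp
        then show "(\<Sum>j\<in>{1..m}. v!j) = (\<Sum>j\<in>{1..m}. w!j) + (\<Sum>j\<in>{1..m}. if w!j = -1 then 1 else 0)"
          by (simp add: sum.distrib)
      qed
      have "(\<Sum>j<m+2. u!j) mod int n = (u!0 + M + u!(m+1)) mod int n" using umid by (subst sum_split3) simp
      also have "\<dots> = ((-M) mod int n + M) mod int n" by (simp add: un gu_def)
      also have "\<dots> = (-M + M) mod int n" by (rule mod_add_left_eq)
      finally have usum: "(\<Sum>j<m+2. u!j) mod int n = 0" by simp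
      define A where "A = (w!0 + (-M) mod int n) mod int n"
      have Amod: "A mod int n = (w!0 - M) mod int n" unfolding A_def by (simp add: mod_add_right_eq)
      have "(\<Sum>j<m+2. v!j) mod int n = (A + ((\<Sum>j\<in>{1..m}. w!j) + M + w!(m+1))) mod int n"
        using vmid by (subst sum_split3) (simp add: vn gv_def A_def algebra_simps)
      also have "\<dots> = (A mod int n + ((\<Sum>j\<in>{1..m}. w!j) + M + w!(m+1))) mod int n" by (rule mod_add_left_eq[symmetric])
      also have "\<dots> = ((w!0 - M) mod int n + ((\<Sum>j\<in>{1..m}. w!j) + M + w!(m+1))) mod int n" by (simp add: Amod)
      also have "\<dots> = ((w!0 - M) + ((\<Sum>j\<in>{1..m}. w!j) + M + w!(m+1))) mod int n" by (rule mod_add_left_eq)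
      also have "\<dots> = (\<Sum>j<m+2. w!j) mod int n" by (subst sum_split3) (simp add: algebra_simps)
      finally have vsum: "(\<Sum>j<m+2. v!j) mod int n = 0" using wsum by simp
      have uv: "u \<in> gvert n m {0..1}" unfolding gvert_def
        using usum np by (auto simp del: upt_Suc simp: un gu_def u_def)
      have vv: "v \<in> gvert n m {0..1}" unfolding gvert_def
        using vsum np w0 by (auto simp del: upt_Suc simp: vn gv_def v_def)
      have "gdist n m {-1..1} z w \<le> gdist n m {0..1} u v"
      proof (rule M[OF lh2 assms zv w])
        have "(v ! 0 - u ! 0) mod int n = ((w!0 + (-M) mod int n) mod int n - (-M) mod int n) mod int n"
          by (simp add: un vn gu_def gv_def)
        also have "\<dots> = (w!0 + (-M) mod int n - (-M) mod int n) mod int n" by (rule mod_diff_left_eq)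
        also have "\<dots> = (w ! 0 - z ! 0) mod int n" by (simp add: zn)
        finally show "(w ! 0 - z ! 0) mod int n = (v ! 0 - u ! 0) mod int n" by simp
        show "(w ! (m + 1) - z ! (m + 1)) mod int n = (v ! (m + 1) - u ! (m + 1)) mod int n"
          by (simp add: un vn zn gu_def gv_def)
        show "w ! j - z ! j = v ! j - u ! j" if j: "1 \<le> j" "j \<le> m" for j
        proof -
          have "w!j = -1 \<or> w!j = 0 \<or> w!j = 1" using wmid[of j] j by auto
          then show ?thesis using j by (auto simp: un vn zn gu_def gv_def)
        qed
      qed
      also have "\<dots> \<le> (SUP u\<in>gvert n m {0..1}. SUP v\<in>gvert n m {0..1}. gdist n m {0..1} u v)"
        by (rule SUP_upper2[OF uv], rule SUP_upper[OF vv])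
      finally show "gdist n m {-1..1} z w \<le> (SUP u\<in>gvert n m {0..1}. SUP v\<in>gvert n m {0..1}. gdist n m {0..1} u v)" .
    qed
  qed
qed

end
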